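(* Let $M$ be an $m$-dimensional manifold without boundary, $f:M\to\mathbb R^n$ ($n=m+k$) an $(r,\lambda)$-immersion with $r>0$ and $0<\lambda\le\frac{1}{8\sqrt m}$. Let $q\in M$, let $A_q$ be an admissible Euclidean isometry for $q$, and put $\varphi_q:=\pi\circ A_q^{-1}\circ f:M\to\mathbb R^m$. Then for every $p\in U_{r,q}$, $$B_{\frac45 r}(\varphi_q(p))\subset\varphi_q(U_{r,p}).$$
   Context: For $q\in M$ let $\tau_f(q)\subset\mathbb R^n$ denote the $m$-dimensional linear subspace $f_*(T_qM)$. $B_\varrho$ denotes the open ball of radius $\varrho$ in $\mathbb R^m$ centered at $0$, and $B_\varrho(x)$ the one centered at $x$. A Euclidean isometry is a map $A(x)=Rx+T$ with $R\in SO(n)$, $T\in\mathbb R^n$; it is admissible for $q\in M$ if $A(0)=f(q)$ and $A$ maps $\mathbb R^m\times\{0\}\subset\mathbb R^m\times\mathbb R^k$ onto $f(q)+\tau_f(q)$; $A_q$ denotes such an isometry. Let $\pi:\mathbb R^m\times\mathbb R^k\to\mathbb R^m$ be the projection onto the first $m$ coordinates. For $r>0$ let $U_{r,q}\subset M$ be the connected component containing $q$ of $(\pi\circ A_q^{-1}\circ f)^{-1}(B_r)$ (independent of the choice of $A_q$). For $A=(a_1,\dots,a_m)\in\mathbb R^{k\times m}$ we use $\|A\|=(\sum_j|a_j|^2)^{1/2}$ and $\|Du\|_{C^0(B_r)}=\sup_{x\in B_r}\|Du(x)\|$. The immersion $f$ is an $(r,\lambda)$-immersion if for every $q\in M$ the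 set $A_q^{-1}\circ f(U_{r,q})$ equals $\{(x,u(x)):x\in B_r\}$ for a differentiable function $u:B_r\to\mathbb R^k$ with $\|Du\|_{C^0(B_r)}\le\lambda$. *)

theory Defs
  imports "HOL-Analysis.Analysis"
begin

text \<open>The manifold M is the whole carrier of a Hausdorff, second countable
  topological type 'a, equipped with a C^1 atlas of charts onto open subsets of R^m (so M has
  no boundary). R^m is real^'m, R^k is real^'k and R^n = R^m x R^k is real^('m + 'k), with
  coordinates Inl i (first m) and Inr j (last k).\<close>

definition C1_on :: "('b::euclidean_space \<Rightarrow> 'c::real_normed_vector) \<Rightarrow> 'b set \<Rightarrow> bool" where
  "C1_on g S \<longleftrightarrow> (\<exists>G. (\<forall>x\<in>S. (g has_derivative blinfun_apply (G x)) (at x)) \<and> continuous_on S G)"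

definition is_chart :: "'a::topological_space set \<Rightarrow> ('a \<Rightarrow> real^'m) \<Rightarrow> bool" where
  "is_chart U \<psi> \<longleftrightarrow> open U \<and> open (\<psi> ` U) \<and> (\<exists>g. homeomorphism U (\<psi> ` U) \<psi> g)"

definition C1_manifold :: "('a::{t2_space,second_countable_topology} set \<times> ('a \<Rightarrow> real^'m)) set \<Rightarrow> bool" where
  "C1_manifold atlas \<longleftrightarrow>
     (\<forall>c\<in>atlas. is_chart (fst c) (snd c)) \<and> \<Union>(fst ` atlas) = UNIV \<and>
     (\<forall>c\<in>atlas. \<forall>d\<in>atlas. C1_on (snd d \<circ> inv_into (fst c) (snd c)) (snd c ` (fst c \<inter> fst d)))"

definition immersion :: "('a::topological_space set \<times> ('a \<Rightarrow> real^'m)) set \<Rightarrow> ('a \<Rightarrow> 'c::euclidean_space) \<Rightarrow> bool" where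
  "immersion atlas f \<longleftrightarrow>
     (\<forall>c\<in>atlas. C1_on (f \<circ> inv_into (fst c) (snd c)) (snd c ` fst c) \<and>
        (\<forall>x\<in>snd c ` fst c. inj (frechet_derivative (f \<circ> inv_into (fst c) (snd c)) (at x))))"

text \<open>tau_f(q) = f_*(T_q M), computed in some chart around q (independent of the chart).\<close>
definition tau :: "('a::topological_space set \<times> ('a \<Rightarrow> real^'m)) set \<Rightarrow> ('a \<Rightarrow> 'c::euclidean_space) \<Rightarrow> 'a \<Rightarrow> 'c set" where
  "tau atlas f q = (let c = (SOME c. c \<in> atlas \<and> q \<in> fst c) in
      range (frechet_derivative (f \<circ> inv_into (fst c) (snd c)) (at (snd c q))))"

definition proj1 :: "real^('m::finite + 'k::finite) \<Rightarrow> real^'m" where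
  "proj1 y = (\<chi> i. y $ Inl i)"

definition proj2 :: "real^('m::finite + 'k::finite) \<Rightarrow> real^'k" where
  "proj2 y = (\<chi> j. y $ Inr j)"

definition flat :: "(real^('m::finite + 'k::finite)) set" where
  "flat = {y. \<forall>j. y $ Inr j = 0}"

text \<open>Euclidean isometry A(x) = R x + T with R in SO(n), and its inverse.\<close>
definition SO :: "(real^'n^'n) set" where
  "SO = {R. orthogonal_matrix R \<and> det R = 1}"

definition iso_inv :: "real^'n^'n \<Rightarrow> real^'n \<Rightarrow> real^'n \<Rightarrow> real^'n" where
  "iso_inv R T y = transpose R *v (y - T)"

definition admissible ::
  "('a::topological_space set \<times> ('a \<Rightarrow> real^'m)) set \<Rightarrow> ('a \<Rightarrow> real^('m::finite + 'k::finite)) \<Rightarrow> 'a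
     \<Rightarrow> real^('m+'k)^('m+'k) \<Rightarrow> real^('m+'k) \<Rightarrow> bool" where
  "admissible atlas f q R T \<longleftrightarrow> R \<in> SO \<and> R *v 0 + T = f q \<and>
     (\<lambda>x. R *v x + T) ` flat = (\<lambda>v. f q + v) ` tau atlas f q"

definition phi :: "('a \<Rightarrow> real^('m::finite + 'k::finite)) \<Rightarrow> real^('m+'k)^('m+'k) \<Rightarrow> real^('m+'k) \<Rightarrow> 'a \<Rightarrow> real^'m" where
  "phi f R T = proj1 \<circ> iso_inv R T \<circ> f"

definition Ucomp :: "('a::topological_space \<Rightarrow> real^('m::finite + 'k::finite)) \<Rightarrow> real^('m+'k)^('m+'k) \<Rightarrow> real^('m+'k)
     \<Rightarrow> real \<Rightarrow> 'a \<Rightarrow> 'a set" where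
  "Ucomp f R T r q = connected_component_set (phi f R T -` ball 0 r) q"

definition frob :: "(real^'m \<Rightarrow> real^'k) \<Rightarrow> real" where
  "frob L = sqrt (\<Sum>j\<in>UNIV. (norm (L (axis j 1)))^2)"

definition r_lambda_immersion ::
  "('a::topological_space set \<times> ('a \<Rightarrow> real^'m)) set \<Rightarrow> ('a \<Rightarrow> real^('m::finite + 'k::finite)) \<Rightarrow> real \<Rightarrow> real \<Rightarrow> bool" where
  "r_lambda_immersion atlas f r lam \<longleftrightarrow>
     immersion atlas f \<and>
     (\<forall>q R T. admissible atlas f q R T \<longrightarrow>
        (\<exists>u :: real^'m \<Rightarrow> real^'k.
           u differentiable_on ball 0 r \<and>
           (\<forall>x\<in>ball 0 r. frob (frechet_derivative u (at x)) \<le> lam) \<and>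
           iso_inv R T ` f ` Ucomp f R T r q = {y. proj1 y \<in> ball 0 r \<and> proj2 y = u (proj1 y)}))"

end

theory Submission imports Defs begin


definition pair :: "real^'m \<Rightarrow> real^'k \<Rightarrow> real^('m::finite + 'k::finite)" where
  "pair a b = (\<chi> i. case i of Inl j \<Rightarrow> a $ j | Inr j \<Rightarrow> b $ j)"

lemma proj1_pair[simp]: "proj1 (pair a b) = a" by (simp add: proj1_def pair_def vec_eq_iff)
lemma proj2_pair[simp]: "proj2 (pair a b) = b" by (simp add: proj2_def pair_def vec_eq_iff)
lemma pair_proj: "pair (proj1 x) (proj2 x) = x"
  by (simp add: proj1_def proj2_def pair_def vec_eq_iff split: sum.split)
lemma proj1_linear: "linear proj1"
  by (simp add: linear_iff proj1_def vec_eq_iff)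
lemma proj2_linear: "linear proj2"
  by (simp add: linear_iff proj2_def vec_eq_iff)
lemma proj1_diff: "proj1 (x - y) = proj1 x - proj1 y" by (simp add: proj1_def vec_eq_iff)
lemma proj2_diff: "proj2 (x - y) = proj2 x - proj2 y" by (simp add: proj2_def vec_eq_iff)
lemma proj1_add: "proj1 (x + y) = proj1 x + proj1 y" by (simp add: proj1_def vec_eq_iff)
lemma proj1_zero[simp]: "proj1 0 = 0" by (simp add: proj1_def vec_eq_iff)
lemma proj2_zero[simp]: "proj2 0 = 0" by (simp add: proj2_def vec_eq_iff)
lemma pair_diff: "pair a b - pair a' b' = pair (a - a') (b - b')"
  by (simp add: pair_def vec_eq_iff split: sum.split)
lemma pair_add: "pair a b + pair a' b' = pair (a + a') (b + b')"
  by (simp add: pair_def vec_eq_iff split: sum.split)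
lemma pair_zero: "pair 0 0 = 0"
  by (simp add: pair_def vec_eq_iff split: sum.split)
lemma pair_flat: "pair a 0 \<in> flat"
  by (simp add: pair_def flat_def)
lemma flat_pair: "y \<in> flat \<Longrightarrow> y = pair (proj1 y) 0"
  by (simp add: pair_def flat_def proj1_def vec_eq_iff split: sum.split)

lemma inner_split: "inner x y = inner (proj1 x) (proj1 y) + inner (proj2 x) (proj2 y)"
proof -
  have "inner x y = (\<Sum>i\<in>UNIV. x$i * y$i)" by (simp add: inner_vec_def)
  also have "\<dots> = (\<Sum>i\<in>Inl ` UNIV \<union> Inr ` UNIV. x$i * y$i)"
    by (metis UNIV_sum)
  also have "\<dots> = (\<Sum>i\<in>Inl ` UNIV. x$i * y$i) + (\<Sum>i\<in>Inr ` UNIV. x$i * y$i)"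
    by (rule sum.union_disjoint) auto
  also have "\<dots> = (\<Sum>j\<in>UNIV. x$Inl j * y$Inl j) + (\<Sum>j\<in>UNIV. x$Inr j * y$Inr j)"
    by (simp add: sum.reindex)
  finally show ?thesis by (simp add: inner_vec_def proj1_def proj2_def)
qed

lemma norm_split: "(norm x)^2 = (norm (proj1 x))^2 + (norm (proj2 x))^2"
  by (simp add: power2_norm_eq_inner inner_split[of x x])

lemma norm_proj1_le: "norm (proj1 x) \<le> norm x"
  using norm_split[of x] by (smt (verit) norm_ge_zero power2_le_imp_le zero_le_power2)
lemma norm_proj2_le: "norm (proj2 x) \<le> norm x"
  using norm_split[of x] by (smt (verit) norm_ge_zero power2_le_imp_le zero_le_power2)

lemma frob_bound:
  fixes L :: "real^'m \<Rightarrow> real^'k"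
  assumes "linear L"
  shows "norm (L a) \<le> frob L * norm a"
proof -
  have "a = (\<Sum>j\<in>UNIV. (a$j) *\<^sub>R axis j 1)"
    using basis_expansion[of a] by (simp add: scalar_mult_eq_scaleR)
  then have "L a = (\<Sum>j\<in>UNIV. (a$j) *\<^sub>R L (axis j 1))"
    by (metis (no_types, lifting) assms linear_scale linear_sum sum.cong)
  then have "norm (L a) \<le> (\<Sum>j\<in>UNIV. \<bar>a$j\<bar> * norm (L (axis j 1)))"
    by (metis (no_types, lifting) norm_scaleR norm_sum sum.cong)
  also have "\<dots> = inner (\<chi> j. \<bar>a$j\<bar>) (\<chi> j. norm (L (axis j 1)))"
    by (simp add: inner_vec_def)
  also have "\<dots> \<le> norm (\<chi> j. \<bar>a$j\<bar>) * norm (\<chi> j. norm (L (axis j 1)) :: real^'m)"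
    by (rule norm_cauchy_schwarz)
  also have "norm (\<chi> j. \<bar>a$j\<bar>) = norm a"
    by (simp add: norm_vec_def)
  also have "norm (\<chi> j. norm (L (axis j 1)) :: real^'m) = frob L"
    by (simp add: norm_vec_def frob_def L2_set_def)
  finally show ?thesis by (simp add: mult.commute)
qed

lemma pair_scale: "c *\<^sub>R pair a b = pair (c *\<^sub>R a) (c *\<^sub>R b)"
  by (simp add: pair_def vec_eq_iff split: sum.split)

lemma core:
  fixes Q :: "real^('m::finite + 'k::finite) \<Rightarrow> real^('m + 'k)"
    and L :: "real^'m \<Rightarrow> real^'k" and v :: "real^'m \<Rightarrow> real^'k"
  assumes Q: "orthogonal_transformation Q" and L: "linear L" and fL: "frob L \<le> lam"
    and lam0: "0 \<le> lam" and lam8: "lam \<le> 1/8" and r: "r > 0"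
    and graph: "\<And>y. proj2 (Q (pair y 0)) = L (proj1 (Q (pair y 0)))"
    and v0: "v 0 = 0"
    and vlip: "\<And>y y'. y \<in> ball 0 r \<Longrightarrow> y' \<in> ball 0 r \<Longrightarrow> norm (v y - v y') \<le> lam * norm (y - y')"
    and z: "norm z < 4/5 * r"
  shows "\<exists>y\<in>ball 0 r. proj1 (Q (pair y (v y))) = z"
proof -
  define P where "P y = proj1 (Q (pair y 0))" for y
  define E where "E w = proj1 (Q (pair 0 w))" for w
  define \<kappa> where "\<kappa> = 1 + lam^2"
  have lam2: "lam^2 \<le> 1/64" using power_mono[OF lam8 lam0, of 2] by (simp add: power2_eq_square)
  have k1: "1 \<le> \<kappa>" "\<kappa> \<le> 65/64" using lam2 by (auto simp: \<kappa>_def)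
  have QL: "linear Q" using Q orthogonal_transformation_linear by blast
  have Qn: "norm (Q x) = norm x" for x using Q orthogonal_transformation by blast
  have Qi: "inner (Q x) (Q y) = inner x y" for x y using Q orthogonal_transformation_def by blast
  have pl: "linear (\<lambda>y::real^'m. pair y (0::real^'k))"
    by (simp add: linear_iff pair_add pair_scale)
  have PL: "linear P"
    unfolding P_def using linear_compose[OF linear_compose[OF pl QL] proj1_linear] by (simp add: o_def)
  have Lb: "norm (L a) \<le> lam * norm a" for a
    using frob_bound[OF L, of a] fL by (meson mult_right_mono norm_ge_zero order_trans)
  have Pb: "norm y \<le> \<kappa> * norm (P y)" for y
  proof -
    have "(norm y)^2 = (norm (Q (pair y 0)))^2"
      using norm_split[of "pair y (0::real^'k)"] by (simp add: Qn)
    also have "\<dots> = (norm (P y))^2 + (norm (L (P y)))^2"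
      using norm_split[of "Q (pair y 0)"] graph[of y] by (simp add: P_def)
    also have "\<dots> \<le> (norm (P y))^2 + (lam * norm (P y))^2"
      using Lb[of "P y"] by (simp add: power_mono)
    also have "\<dots> = \<kappa> * (norm (P y))^2" by (simp add: \<kappa>_def power_mult_distrib algebra_simps)
    also have "\<dots> \<le> (\<kappa> * norm (P y))^2"
    proof -
      have "\<kappa> * (norm (P y))^2 = 1 * (\<kappa> * (norm (P y))^2)" by simp
      also have "\<dots> \<le> \<kappa> * (\<kappa> * (norm (P y))^2)"
        by (rule mult_right_mono) (use k1 in auto)
      finally show ?thesis by (simp add: power2_eq_square algebra_simps)
    qed
    finally show ?thesis by (rule power2_le_imp_le) (use k1 in simp)
  qed
  have Pinj: "inj P"
  proof (rule injI)
    fix x y assume "P x = P y"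
    then have "P (x - y) = 0" using PL by (simp add: linear_diff)
    then show "x = y" using Pb[of "x - y"] by simp
  qed
  have Psurj: "surj P" using linear_inj_imp_surj[OF PL Pinj] .
  define Pinv where "Pinv w = (SOME y. P y = w)" for w
  have PPinv: "P (Pinv w) = w" for w
    unfolding Pinv_def using Psurj by (metis (mono_tags, lifting) someI surjD)
  have Pinvb: "norm (Pinv a - Pinv b) \<le> \<kappa> * norm (a - b)" for a b
    using Pb[of "Pinv a - Pinv b"] PL by (simp add: linear_diff PPinv)
  have Eb: "norm (E w) \<le> lam * norm w" for w
  proof -
    define b where "b = E w"
    define c where "c = proj2 (Q (pair 0 w))"
    obtain y where y: "P y = b" using Psurj by (metis surjD)
    have "inner (Q (pair y 0)) (Q (pair 0 w)) = 0"
      unfolding Qi by (simp add: inner_split[of "pair y 0"])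
    then have "inner b b + inner (L b) c = 0"
      using inner_split[of "Q (pair y 0)" "Q (pair 0 w)"] graph[of y] y
      by (simp add: P_def b_def E_def c_def)
    then have "(norm b)^2 = - inner (L b) c" by (simp add: power2_norm_eq_inner)
    also have "\<dots> \<le> norm (L b) * norm c"
      by (metis abs_le_iff Cauchy_Schwarz_ineq2 minus_le_iff) 
    also have "\<dots> \<le> (lam * norm b) * norm w"
      apply (rule mult_mono[OF Lb])
      using norm_proj2_le[of "Q (pair 0 w)"] norm_split[of "pair (0::real^'m) w"]
      by (auto simp: c_def Qn intro: mult_nonneg_nonneg lam0)
    finally have "norm b * norm b \<le> norm b * (lam * norm w)"
      by (simp add: power2_eq_square mult.assoc mult.left_commute)
    then show ?thesis
      by (cases "norm b = 0") (auto simp: b_def lam0 intro: mult_nonneg_nonneg)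
  qed
  have Ediff: "E w - E w' = E (w - w')" for w w'
  proof -
    have "Q (pair 0 (w - w')) = Q (pair 0 w) - Q (pair 0 w')"
      using QL pair_diff[of 0 w 0 w'] by (metis diff_zero linear_diff)
    then show ?thesis unfolding E_def by (simp add: proj1_diff)
  qed
  have decomp: "proj1 (Q (pair y w)) = P y + E w" for y w
  proof -
    have "pair y w = pair y 0 + pair 0 w" by (simp add: pair_add)
    then show ?thesis unfolding P_def E_def using QL by (simp add: linear_add proj1_add)
  qed
  define \<rho> where "\<rho> = 9/10 * r"
  define G where "G y = Pinv (z - E (v y))" for y
  have Sb: "cball 0 \<rho> \<subseteq> ball 0 r" using r by (auto simp: \<rho>_def)
  have vb: "norm (v y) \<le> lam * norm y" if "y \<in> ball 0 r" for y
    using vlip[OF that, of 0] r v0 by simp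
  have Pinv0: "Pinv 0 = 0" using Pb[of "Pinv 0"] PPinv[of 0] by simp
  have GS: "G ` cball 0 \<rho> \<subseteq> cball 0 \<rho>"
  proof
    fix x assume "x \<in> G ` cball 0 \<rho>"
    then obtain y where y: "y \<in> cball 0 \<rho>" and x: "x = G y" by auto
    have yb: "y \<in> ball 0 r" using y Sb by blast
    have "norm x \<le> \<kappa> * norm (z - E (v y))"
      using Pinvb[of "z - E (v y)" 0] by (simp add: x G_def Pinv0)
    also have "norm (z - E (v y)) \<le> norm z + lam * (lam * norm y)"
      using norm_triangle_ineq4[of z "E (v y)"] Eb[of "v y"] vb[OF yb] lam0
      by (smt (verit) mult_left_mono)
    also have "lam * (lam * norm y) \<le> 1/64 * \<rho>"
    proof -
      have "(lam * lam) * norm y \<le> (1/64) * \<rho>"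
        by (rule mult_mono) (use lam2 y in \<open>auto simp: power2_eq_square\<close>)
      then show ?thesis by (simp add: mult.assoc)
    qed
    finally have "norm x \<le> \<kappa> * (norm z + 1/64 * \<rho>)"
      using k1 by (smt (verit) mult_left_mono)
    also have "\<dots> \<le> 65/64 * (4/5 * r + 1/64 * \<rho>)"
      apply (rule mult_mono) using k1 z r by (auto simp: \<rho>_def)
    also have "\<dots> \<le> \<rho>" using r by (simp add: \<rho>_def)
    finally show "x \<in> cball 0 \<rho>" by simp
  qed
  have Glip: "dist (G x) (G y) \<le> (\<kappa> * lam^2) * dist x y" if "x \<in> cball 0 \<rho>" "y \<in> cball 0 \<rho>" for x y
  proof -
    have xb: "x \<in> ball 0 r" "y \<in> ball 0 r" using that Sb by blast+
    have "dist (G x) (G y) \<le> \<kappa> * norm ((z - E (v x)) - (z - E (v y)))"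
      using Pinvb[of "z - E (v x)" "z - E (v y)"] by (simp add: G_def dist_norm)
    also have "norm ((z - E (v x)) - (z - E (v y))) = norm (E (v y - v x))"
      by (simp add: Ediff[symmetric])
    also have "\<dots> \<le> lam * norm (v y - v x)" by (rule Eb)
    also have "\<dots> \<le> lam * (lam * norm (y - x))" using vlip[OF xb(2) xb(1)] lam0 by (simp add: mult_left_mono)
    finally show ?thesis using k1
      by (simp add: dist_norm norm_minus_commute power2_eq_square mult.assoc)
  qed
  have c1: "\<kappa> * lam^2 < 1"
  proof -
    have "\<kappa> * lam^2 \<le> 65/64 * (1/64)" by (rule mult_mono) (use k1 lam2 in auto)
    then show ?thesis by simp
  qed
  obtain y where y: "y \<in> cball 0 \<rho>" "G y = y"
    using Banach_fix[of "cball 0 \<rho>" "\<kappa> * lam^2" G] complete_eq_closed GS Glip c1 k1 r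
    by (auto simp: \<rho>_def)
  have "P y = z - E (v y)" using y(2) PPinv by (metis G_def)
  then have "proj1 (Q (pair y (v y))) = z" by (simp add: decomp)
  then show ?thesis using y Sb by blast
qed


lemma chart_inv:
  assumes "homeomorphism V (\<psi> ` V) \<psi> g" "z \<in> \<psi> ` V"
  shows "inv_into V \<psi> z = g z"
proof -
  have "inv_into V \<psi> z \<in> V" "\<psi> (inv_into V \<psi> z) = z" using assms(2) by (auto intro: inv_into_into f_inv_into_f)
  then show ?thesis using assms(1) unfolding homeomorphism_def by metis
qed

lemma open_comp:
  fixes atlas :: "('a::topological_space set \<times> ('a \<Rightarrow> real^'m::finite)) set"
    and h :: "'a \<Rightarrow> 'b::topological_space"
  assumes cov: "\<Union>(fst ` atlas) = UNIV" and ch: "\<forall>c\<in>atlas. is_chart (fst c) (snd c)"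
    and hc: "\<forall>c\<in>atlas. continuous_on (snd c ` fst c) (h \<circ> inv_into (fst c) (snd c))"
    and B: "open B"
  shows "open (connected_component_set (h -` B) x0)"
proof (subst open_subopen, intro ballI)
  let ?S = "h -` B"
  let ?U = "connected_component_set ?S x0"
  fix x assume xU: "x \<in> ?U"
  have xS: "x \<in> ?S" using xU connected_component_subset by blast
  obtain c where c: "c \<in> atlas" "x \<in> fst c" using cov by blast
  define V where "V = fst c"
  define \<psi> where "\<psi> = snd c"
  have oV: "open V" and oI: "open (\<psi> ` V)" and "\<exists>g. homeomorphism V (\<psi> ` V) \<psi> g"
    using ch c(1) by (auto simp: is_chart_def V_def \<psi>_def)
  then obtain g where hom: "homeomorphism V (\<psi> ` V) \<psi> g" by blast
  have gx: "g (\<psi> x) = x" using hom c(2) by (simp add: homeomorphism_def V_def)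
  have cont: "continuous_on (\<psi> ` V) (h \<circ> g)"
    using hc c(1) continuous_on_cong[OF refl, of "\<psi> ` V" "h \<circ> inv_into V \<psi>" "h \<circ> g"] chart_inv[OF hom]
    by (auto simp: V_def \<psi>_def)
  define Ob where "Ob = (h \<circ> g) -` B \<inter> \<psi> ` V"
  have oOb: "open Ob" using continuous_on_open_vimage[OF oI, of "h \<circ> g"] cont B unfolding Ob_def by blast
  have xOb: "\<psi> x \<in> Ob" using gx xS c(2) by (auto simp: Ob_def V_def)
  obtain e where e: "e > 0" "ball (\<psi> x) e \<subseteq> Ob" using oOb xOb open_contains_ball by blast
  define W where "W = g ` ball (\<psi> x) e"
  have bsub: "ball (\<psi> x) e \<subseteq> \<psi> ` V" using e Ob_def by blast
  have "openin (top_of_set V) W"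
    unfolding W_def
    by (rule homeomorphism_imp_open_map[OF homeomorphism_symD[OF hom]]) (use bsub in \<open>auto intro: open_subset\<close>)
  then have oW: "open W" using oV openin_open_trans by blast
  have cW: "connected W" unfolding W_def
    by (rule connected_continuous_image) (use hom bsub in \<open>auto simp: homeomorphism_def intro: continuous_on_subset\<close>)
  have xW: "x \<in> W" using gx e(1) by (auto simp: W_def) (metis centre_in_ball e(1) image_eqI)
  have WS: "W \<subseteq> ?S" using e(2) by (auto simp: W_def Ob_def)
  have "W \<subseteq> connected_component_set ?S x" by (rule connected_component_maximal[OF xW cW WS])
  also have "\<dots> = ?U" using connected_component_eq[OF xU] .
  finally show "\<exists>T. open T \<and> x \<in> T \<and> T \<subseteq> ?U" using oW xW by blast
qed



lemma iso_deriv: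
  fixes h0 :: "real^'m::finite \<Rightarrow> real^'n::finite"
  assumes "(h0 has_derivative D) (at z)"
  shows "((\<lambda>z. iso_inv R T (h0 z)) has_derivative (\<lambda>w. transpose R *v D w)) (at z)"
proof -
  have bl: "bounded_linear (\<lambda>y. transpose R *v (y::real^'n))"
    using linear_conv_bounded_linear matrix_vector_mul_linear by blast
  have "((\<lambda>z. h0 z - T) has_derivative D) (at z)"
    using assms by (auto intro!: derivative_eq_intros)
  from bounded_linear.has_derivative[OF bl this]
  show ?thesis by (simp add: iso_inv_def)
qed

lemma proj1_deriv:
  assumes "(h0 has_derivative D) F"
  shows "((\<lambda>z. proj1 (h0 z)) has_derivative (\<lambda>w. proj1 (D w))) F"
  using bounded_linear.has_derivative[OF linear_conv_bounded_linear[THEN iffD1, OF proj1_linear] assms] .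

lemma proj2_deriv:
  assumes "(h0 has_derivative D) F"
  shows "((\<lambda>z. proj2 (h0 z)) has_derivative (\<lambda>w. proj2 (D w))) F"
  using bounded_linear.has_derivative[OF linear_conv_bounded_linear[THEN iffD1, OF proj2_linear] assms] .

lemma Ucomp_open:
  fixes atlas :: "('a::{t2_space,second_countable_topology} set \<times> ('a \<Rightarrow> real^'m::finite)) set"
    and f :: "'a \<Rightarrow> real^('m + 'k::finite)"
  assumes M: "C1_manifold atlas" and imm: "immersion atlas f"
  shows "open (Ucomp f R T r q)"
  unfolding Ucomp_def
proof (rule open_comp)
  show "\<Union>(fst ` atlas) = UNIV" "\<forall>c\<in>atlas. is_chart (fst c) (snd c)"
    using M by (auto simp: C1_manifold_def)
  show "open (ball (0::real^'m) r)" by simp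
  show "\<forall>c\<in>atlas. continuous_on (snd c ` fst c) (phi f R T \<circ> inv_into (fst c) (snd c))"
  proof
    fix c assume c: "c \<in> atlas"
    then obtain G where G: "\<forall>x\<in>snd c ` fst c. ((f \<circ> inv_into (fst c) (snd c)) has_derivative blinfun_apply (G x)) (at x)"
      using imm by (auto simp: immersion_def C1_on_def)
    show "continuous_on (snd c ` fst c) (phi f R T \<circ> inv_into (fst c) (snd c))"
    proof (rule has_derivative_continuous_on)
      fix x assume "x \<in> snd c ` fst c"
      then have "((f \<circ> inv_into (fst c) (snd c)) has_derivative blinfun_apply (G x)) (at x)" using G by blast
      from proj1_deriv[OF iso_deriv[OF this, of R T]]
      show "((phi f R T \<circ> inv_into (fst c) (snd c)) has_derivative (\<lambda>w. proj1 (transpose R *v blinfun_apply (G x) w))) (at x within snd c ` fst c)"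
        by (auto simp: phi_def o_def intro: has_derivative_at_withinI)
    qed
  qed
qed

lemma tangent:
  fixes atlas :: "('a::{t2_space,second_countable_topology} set \<times> ('a \<Rightarrow> real^'m::finite)) set"
    and f :: "'a \<Rightarrow> real^('m + 'k::finite)" and u :: "real^'m \<Rightarrow> real^'k"
  assumes M: "C1_manifold atlas" and imm: "immersion atlas f"
    and ud: "u differentiable_on ball 0 r"
    and img: "iso_inv R T ` f ` Ucomp f R T r q = {y. proj1 y \<in> ball 0 r \<and> proj2 y = u (proj1 y)}"
    and p: "p \<in> Ucomp f R T r q"
    and t: "t \<in> tau atlas f p"
  shows "proj2 (transpose R *v t) = frechet_derivative u (at (phi f R T p)) (proj1 (transpose R *v t))"
proof -
  define U where "U = Ucomp f R T r q"
  define L where "L = frechet_derivative u (at (phi f R T p))"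
  define c where "c = (SOME c. c \<in> atlas \<and> p \<in> fst c)"
  have "\<exists>c. c \<in> atlas \<and> p \<in> fst c"
  proof -
    have "p \<in> \<Union>(fst ` atlas)" using M by (simp add: C1_manifold_def)
    then show ?thesis by blast
  qed
  from someI_ex[OF this] have c: "c \<in> atlas" "p \<in> fst c" unfolding c_def by blast+
  define V where "V = fst c"
  define \<psi> where "\<psi> = snd c"
  have oV: "open V" and oI: "open (\<psi> ` V)" and "\<exists>g. homeomorphism V (\<psi> ` V) \<psi> g"
    using M c(1) by (auto simp: C1_manifold_def is_chart_def V_def \<psi>_def)
  then obtain g where hom: "homeomorphism V (\<psi> ` V) \<psi> g" by blast
  define h0 where "h0 = f \<circ> inv_into V \<psi>"
  define D where "D = frechet_derivative h0 (at (\<psi> p))"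
  have tauD: "tau atlas f p = range D"
    unfolding tau_def Let_def D_def h0_def V_def \<psi>_def c_def by simp
  obtain G where G: "\<forall>x\<in>\<psi> ` V. (h0 has_derivative blinfun_apply (G x)) (at x)"
    using imm c(1) by (auto simp: immersion_def C1_on_def h0_def V_def \<psi>_def)
  have pV: "p \<in> V" using c V_def by simp
  have hD0: "(h0 has_derivative blinfun_apply (G (\<psi> p))) (at (\<psi> p))"
    using G pV by blast
  have hD: "(h0 has_derivative D) (at (\<psi> p))"
    using hD0 frechet_derivative_at[OF hD0] unfolding D_def by simp
  have ginv: "inv_into V \<psi> z = g z" if "z \<in> \<psi> ` V" for z using chart_inv[OF hom that] .
  have gpsi: "g (\<psi> s) = s" if "s \<in> V" for s using hom that by (simp add: homeomorphism_def)
  have oU: "open U" unfolding U_def by (rule Ucomp_open[OF M imm])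
  have pU: "p \<in> U" using p U_def by simp
  have Usub: "U \<subseteq> phi f R T -` ball 0 r" unfolding U_def Ucomp_def by (rule connected_component_subset)
  define N where "N = \<psi> ` (V \<inter> U)"
  have "openin (top_of_set (\<psi> ` V)) N"
    unfolding N_def by (rule homeomorphism_imp_open_map[OF hom]) (use oU in auto)
  then have oN: "open N" using oI openin_open_trans by blast
  have pN: "\<psi> p \<in> N" using pV pU N_def by blast
  define h where "h z = iso_inv R T (h0 z)" for z
  have hN: "proj2 (h z) = u (proj1 (h z))" if zN: "z \<in> N" for z
  proof -
    obtain s where s: "s \<in> V" "s \<in> U" "z = \<psi> s" using zN N_def by blast
    have hz: "h z = iso_inv R T (f s)" using s ginv gpsi by (simp add: h_def h0_def)
    have "iso_inv R T (f s) \<in> iso_inv R T ` f ` Ucomp f R T r q" using s U_def by blast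
    then have "iso_inv R T (f s) \<in> {y. proj1 y \<in> ball 0 r \<and> proj2 y = u (proj1 y)}" by (simp only: img)
    then show ?thesis using hz by simp
  qed
  have hp: "proj1 (h (\<psi> p)) = phi f R T p"
    using ginv gpsi pV by (simp add: h_def h0_def phi_def)
  have xpb: "phi f R T p \<in> ball 0 r" using Usub pU by blast
  have "u differentiable (at (phi f R T p))"
    using ud xpb differentiable_on_eq_differentiable_at[of "ball 0 r" u] by simp
  then have uD: "(u has_derivative L) (at (phi f R T p))"
    unfolding L_def using frechet_derivative_works by blast
  have hd: "(h has_derivative (\<lambda>w. transpose R *v D w)) (at (\<psi> p))"
    unfolding h_def by (rule iso_deriv[OF hD])
  have d1: "((\<lambda>z. proj1 (h z)) has_derivative (\<lambda>w. proj1 (transpose R *v D w))) (at (\<psi> p))"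
    by (rule proj1_deriv[OF hd])
  have d2: "((\<lambda>z. proj2 (h z)) has_derivative (\<lambda>w. proj2 (transpose R *v D w))) (at (\<psi> p))"
    by (rule proj2_deriv[OF hd])
  have d3: "((u \<circ> (\<lambda>z. proj1 (h z))) has_derivative (L \<circ> (\<lambda>w. proj1 (transpose R *v D w)))) (at (\<psi> p))"
    by (rule diff_chain_at[OF d1]) (use uD hp in simp)
  have d4: "((\<lambda>z. proj2 (h z)) has_derivative (L \<circ> (\<lambda>w. proj1 (transpose R *v D w)))) (at (\<psi> p))"
    by (rule has_derivative_transform_within_open[OF d3 oN pN]) (use hN in simp)
  have eq: "(\<lambda>w. proj2 (transpose R *v D w)) = (L \<circ> (\<lambda>w. proj1 (transpose R *v D w)))"
    using has_derivative_unique[OF d2 d4] .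
  obtain w where "t = D w" using t tauD by blast
  then show ?thesis using fun_cong[OF eq, of w] by (simp add: L_def)
qed



lemma orth_mat_ot:
  fixes A :: "real^'n::finite^'n"
  assumes "orthogonal_matrix A"
  shows "orthogonal_transformation (\<lambda>x. A *v x)"
  using assms orthogonal_transformation_matrix[of "\<lambda>x. A *v x"]
  by (simp add: matrix_vector_mul_linear matrix_of_matrix_vector_mul)

lemma orth_inv:
  fixes A :: "real^'n::finite^'n"
  assumes "orthogonal_matrix A"
  shows "A *v (transpose A *v y) = y"
  using assms unfolding orthogonal_matrix_def by (metis matrix_vector_mul_assoc matrix_vector_mul_lid)

theorem mainTheorem4:
  fixes atlas :: "('a::{t2_space,second_countable_topology} set \<times> ('a \<Rightarrow> real^'m::finite)) set"
    and f :: "'a \<Rightarrow> real^('m + 'k::finite)"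
    and r lam :: real
    and q :: 'a
    and R :: "real^('m+'k)^('m+'k)" and T :: "real^('m+'k)"
  assumes "C1_manifold atlas"
    and "r_lambda_immersion atlas f r lam"
    and "r > 0" and "0 < lam" and "lam \<le> 1 / (8 * sqrt (real CARD('m)))"
    and "admissible atlas f q R T"
  shows "\<forall>p \<in> Ucomp f R T r q. \<forall>R' T'. admissible atlas f p R' T' \<longrightarrow>
           ball (phi f R T p) (4/5 * r) \<subseteq> phi f R T ` Ucomp f R' T' r p"
proof (intro ballI allI impI subsetI)
  note M = assms(1) and rl = assms(2) and r = assms(3) and lam0 = assms(4) and lamb = assms(5)
    and adq = assms(6)
  fix p R' T' z
  assume p: "p \<in> Ucomp f R T r q" and adp: "admissible atlas f p R' T'"
    and z: "z \<in> ball (phi f R T p) (4/5 * r)"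
  have imm: "immersion atlas f" using rl r_lambda_immersion_def by blast
  obtain u :: "real^'m \<Rightarrow> real^'k" where ud: "u differentiable_on ball 0 r"
    and uf: "\<forall>x\<in>ball 0 r. frob (frechet_derivative u (at x)) \<le> lam"
    and uimg: "iso_inv R T ` f ` Ucomp f R T r q = {y. proj1 y \<in> ball 0 r \<and> proj2 y = u (proj1 y)}"
    using rl adq unfolding r_lambda_immersion_def by blast
  obtain v :: "real^'m \<Rightarrow> real^'k" where vd: "v differentiable_on ball 0 r"
    and vf: "\<forall>x\<in>ball 0 r. frob (frechet_derivative v (at x)) \<le> lam"
    and vimg: "iso_inv R' T' ` f ` Ucomp f R' T' r p = {y. proj1 y \<in> ball 0 r \<and> proj2 y = v (proj1 y)}"
    using rl adp unfolding r_lambda_immersion_def by blast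
  have lam8: "lam \<le> 1/8"
  proof -
    have "1 \<le> sqrt (real CARD('m))" by simp
    then have "1 / (8 * sqrt (real CARD('m))) \<le> 1/8" by (simp add: field_simps)
    then show ?thesis using lamb by linarith
  qed
  define xp where "xp = phi f R T p"
  define L where "L = frechet_derivative u (at xp)"
  have Usub: "Ucomp f R T r q \<subseteq> phi f R T -` ball 0 r" unfolding Ucomp_def by (rule connected_component_subset)
  have xpb: "xp \<in> ball 0 r" using Usub p xp_def by blast
  have "u differentiable (at xp)"
    using ud xpb differentiable_on_eq_differentiable_at[of "ball 0 r" u] by simp
  then have uD: "(u has_derivative L) (at xp)"
    unfolding L_def using frechet_derivative_works by blast
  have Llin: "linear L" using has_derivative_linear[OF uD] .
  have fL: "frob L \<le> lam" using uf xpb L_def by blast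
  have oR: "orthogonal_matrix R" and oR': "orthogonal_matrix R'"
    using adq adp by (auto simp: admissible_def SO_def)
  have T': "T' = f p" using adp by (simp add: admissible_def)
  define Q where "Q x = transpose R *v (R' *v x)" for x
  have Qot: "orthogonal_transformation Q"
  proof -
    have oRt: "orthogonal_matrix (transpose R)" using oR by simp
    have "Q = (\<lambda>x. transpose R *v x) \<circ> (\<lambda>x. R' *v x)" by (simp add: Q_def fun_eq_iff)
    then show ?thesis
      using orthogonal_transformation_compose[OF orth_mat_ot[OF oRt] orth_mat_ot[OF oR']] by simp
  qed
  have graph: "proj2 (Q (pair y 0)) = L (proj1 (Q (pair y 0)))" for y
  proof -
    have "R' *v pair y 0 + T' \<in> (\<lambda>x. R' *v x + T') ` flat" using pair_flat by blast
    moreover have "(\<lambda>x. R' *v x + T') ` flat = (\<lambda>v. f p + v) ` tau atlas f p"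
      using adp admissible_def by blast
    ultimately have "R' *v pair y 0 + T' \<in> (\<lambda>v. f p + v) ` tau atlas f p" by simp
    then have "R' *v pair y 0 \<in> tau atlas f p" using T' by auto
    from tangent[OF M imm ud uimg p this] show ?thesis by (simp add: Q_def L_def xp_def)
  qed
  have pp: "p \<in> Ucomp f R' T' r p"
    using r T' by (simp add: Ucomp_def phi_def iso_inv_def)
  have "iso_inv R' T' (f p) \<in> iso_inv R' T' ` f ` Ucomp f R' T' r p" using pp by blast
  then have "iso_inv R' T' (f p) \<in> {y. proj1 y \<in> ball 0 r \<and> proj2 y = v (proj1 y)}" by (simp only: vimg)
  then have v0: "v 0 = 0" using T' by (simp add: iso_inv_def)
  have vlip: "norm (v y - v y') \<le> lam * norm (y - y')" if "y \<in> ball 0 r" "y' \<in> ball 0 r" for y y'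
  proof (rule differentiable_bound[of "ball 0 r" v "\<lambda>x. frechet_derivative v (at x)"])
    show "convex (ball (0::real^'m) r)" by simp
    show "(v has_derivative frechet_derivative v (at x)) (at x within ball 0 r)" if "x \<in> ball 0 r" for x
    proof -
      have "v differentiable (at x)"
        using vd that differentiable_on_eq_differentiable_at[of "ball 0 r" v] by simp
      then show ?thesis using frechet_derivative_works has_derivative_at_withinI by blast
    qed
    show "onorm (frechet_derivative v (at x)) \<le> lam" if "x \<in> ball 0 r" for x
    proof -
      have "v differentiable (at x)"
        using vd that differentiable_on_eq_differentiable_at[of "ball 0 r" v] by simp
      then have lin: "linear (frechet_derivative v (at x))"
        using frechet_derivative_works has_derivative_linear by blast
      show ?thesis
      proof (rule onorm_le)
        fix w show "norm (frechet_derivative v (at x) w) \<le> lam * norm w"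
          using frob_bound[OF lin, of w] vf that by (meson mult_right_mono norm_ge_zero order_trans)
      qed
    qed
  qed (use that in simp_all)
  have zn: "norm (z - xp) < 4/5 * r" using z by (simp add: xp_def dist_norm norm_minus_commute)
  obtain y where y: "y \<in> ball 0 r" and yz: "proj1 (Q (pair y (v y))) = z - xp"
    using core[OF Qot Llin fL less_imp_le[OF lam0] lam8 r graph v0 vlip zn] by blast
  have "pair y (v y) \<in> {y. proj1 y \<in> ball 0 r \<and> proj2 y = v (proj1 y)}" using y by simp
  then obtain s where s: "s \<in> Ucomp f R' T' r p" and sy: "iso_inv R' T' (f s) = pair y (v y)"
    unfolding vimg[symmetric] by (elim imageE) auto
  have fs: "f s = R' *v pair y (v y) + T'"
    using orth_inv[OF oR', of "f s - T'"] sy by (simp add: iso_inv_def)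
  have "phi f R T s = proj1 (transpose R *v (R' *v pair y (v y)) + transpose R *v (f p - T))"
  proof -
    have "f s - T = R' *v pair y (v y) + (f p - T)" using fs T' by simp
    then show ?thesis unfolding phi_def iso_inv_def o_def by (simp only: matrix_vector_right_distrib)
  qed
  also have "\<dots> = proj1 (Q (pair y (v y))) + xp"
    by (simp add: Q_def proj1_add xp_def phi_def iso_inv_def)
  also have "\<dots> = z" using yz by simp
  finally show "z \<in> phi f R T ` Ucomp f R' T' r p" using s by blast
qed


end
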